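(* Let $L$ be a distributive lattice. If $L$ is countably order bounded, then $\mathrm{FVL}\langle L\rangle$ is order dense in $\mathrm{FBL}\langle L\rangle$. If moreover $L$ is totally ordered, the converse holds: if $\mathrm{FVL}\langle L\rangle$ is order dense in $\mathrm{FBL}\langle L\rangle$, then $L$ is countably order bounded.
   Context: $L^*$ is the set of all lattice homomorphisms $x^*:L\to[-1,1]$; for $x\in L$, $\delta_x:L^*\to\mathbb R$ is $\delta_x(x^* )=x^*(x)$. A function $f:L^*\to\mathbb R$ is positively homogeneous if $f(\lambda x^* )=\lambda f(x^* )$ whenever $\lambda\ge0$ and $\lambda x^*\in L^*$; for such $f$, $\|f\|=\sup\{\sum_{i=1}^m|f(x_i^* )|: m\in\mathbb N,\ x_i^*\in L^*,\ \sup_{x\in L}\sum_{i=1}^m|x_i^*(x)|\le1\}$. $\mathrm{FVL}\langle L\rangle$ is the vector sublattice generated by $\{\delta_x:x\in L\}$ (pointwise operations), and $\mathrm{FBL}\langle L\rangle$ is its norm closure inside the Banach lattice of positively homogeneous functions with finite norm, ordered pointwise. $\mathrm{FVL}\langle L\rangle$ is order dense in $\mathrm{FBL}\langle L\rangle$ if for every $f\in\mathrm{FBL}\langle L\rangle$ with $f>0$ there is $g\in\mathrm{FVL}\langle L\rangle$ with $0<g\le f$. A lattice $L$ is countably order bounded if for every countable $A\subseteq L$ there are $a,b\in L$ with $a\le x\le b$ for all $x\in A$. *)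

theory Defs
  imports Complex_Main "HOL-Library.Countable_Set" "HOL-Library.Extended_Real"
begin

definition lat_dual :: "('a::lattice \<Rightarrow> real) set" where
  "lat_dual = {\<phi>. (\<forall>x. \<phi> x \<in> {-1..1}) \<and>
      (\<forall>x y. \<phi> (sup x y) = max (\<phi> x) (\<phi> y) \<and> \<phi> (inf x y) = min (\<phi> x) (\<phi> y))}"

definition delta :: "'a::lattice \<Rightarrow> ('a \<Rightarrow> real) \<Rightarrow> real" where
  "delta x = (\<lambda>\<phi>. \<phi> x)"

inductive_set fvl :: "(('a::lattice \<Rightarrow> real) \<Rightarrow> real) set" where
  gen: "delta x \<in> fvl"
| add: "f \<in> fvl \<Longrightarrow> g \<in> fvl \<Longrightarrow> (\<lambda>\<phi>. f \<phi> + g \<phi>) \<in> fvl"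
| smult: "f \<in> fvl \<Longrightarrow> (\<lambda>\<phi>. c * f \<phi>) \<in> fvl"
| sup: "f \<in> fvl \<Longrightarrow> g \<in> fvl \<Longrightarrow> (\<lambda>\<phi>. max (f \<phi>) (g \<phi>)) \<in> fvl"
| inf: "f \<in> fvl \<Longrightarrow> g \<in> fvl \<Longrightarrow> (\<lambda>\<phi>. min (f \<phi>) (g \<phi>)) \<in> fvl"

definition pos_homog :: "(('a::lattice \<Rightarrow> real) \<Rightarrow> real) \<Rightarrow> bool" where
  "pos_homog f = (\<forall>\<phi>\<in>lat_dual. \<forall>c::real. c \<ge> 0 \<longrightarrow> (\<lambda>x. c * \<phi> x) \<in> lat_dual \<longrightarrow>
       f (\<lambda>x. c * \<phi> x) = c * f \<phi>)"

definition fbl_norm :: "(('a::lattice \<Rightarrow> real) \<Rightarrow> real) \<Rightarrow> ereal" where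
  "fbl_norm f = (SUP xs \<in> {xs. set xs \<subseteq> lat_dual \<and> (\<forall>x. (\<Sum>\<phi>\<leftarrow>xs. \<bar>\<phi> x\<bar>) \<le> 1)}.
       ereal (\<Sum>\<phi>\<leftarrow>xs. \<bar>f \<phi>\<bar>))"

definition fbl :: "(('a::lattice \<Rightarrow> real) \<Rightarrow> real) set" where
  "fbl = {f. pos_homog f \<and> fbl_norm f < \<infinity> \<and>
      (\<forall>e>0. \<exists>g\<in>fvl. fbl_norm (\<lambda>\<phi>. f \<phi> - g \<phi>) < ereal e)}"

definition fvl_order_dense :: "'a::lattice itself \<Rightarrow> bool" where
  "fvl_order_dense _ = (\<forall>f \<in> (fbl :: (('a \<Rightarrow> real) \<Rightarrow> real) set).
      ((\<forall>\<phi>\<in>lat_dual. 0 \<le> f \<phi>) \<and> (\<exists>\<phi>\<in>lat_dual. f \<phi> \<noteq> 0)) \<longrightarrow>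
      (\<exists>g\<in>fvl. (\<forall>\<phi>\<in>lat_dual. 0 \<le> g \<phi> \<and> g \<phi> \<le> f \<phi>) \<and> (\<exists>\<phi>\<in>lat_dual. g \<phi> \<noteq> 0)))"

definition countably_order_bounded :: "'a::order itself \<Rightarrow> bool" where
  "countably_order_bounded _ = (\<forall>A :: 'a set. countable A \<longrightarrow>
      (\<exists>a b. \<forall>x\<in>A. a \<le> x \<and> x \<le> b))"

end

theory Submission
  imports Defs
begin

lemma lat_dual_mono: "\<phi> \<in> lat_dual \<Longrightarrow> a \<le> b \<Longrightarrow> \<phi> a \<le> \<phi> b"
proof -
  assume p: "\<phi> \<in> lat_dual" and ab: "a \<le> b"
  have "\<phi> (inf a b) = min (\<phi> a) (\<phi> b)" using p unfolding lat_dual_def by blast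
  moreover have "inf a b = a" using ab by (simp add: inf_absorb1)
  ultimately show ?thesis by simp
qed

lemma lat_dual_bound: "\<phi> \<in> lat_dual \<Longrightarrow> \<bar>\<phi> x\<bar> \<le> 1"
proof -
  assume "\<phi> \<in> lat_dual"
  then have "\<phi> x \<in> {-1..1}" unfolding lat_dual_def by blast
  then show ?thesis by auto
qed

lemma max_mono_fun: "mono (h::real\<Rightarrow>real) \<Longrightarrow> h (max u v) = max (h u) (h v)"
proof (cases "u \<le> v")
  case True
  assume m: "mono h"
  then have "h u \<le> h v" using True by (rule monoD)
  then show ?thesis using True by (simp add: max_absorb2)
next
  case False
  assume m: "mono h"
  then have "h v \<le> h u" using False by (intro monoD[OF m]) simp
  then show ?thesis using False by (simp add: max_absorb1)
qed

lemma min_mono_fun: "mono (h::real\<Rightarrow>real) \<Longrightarrow> h (min u v) = min (h u) (h v)"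
proof (cases "u \<le> v")
  case True
  assume m: "mono h"
  then have "h u \<le> h v" using True by (rule monoD)
  then show ?thesis using True by (simp add: min_absorb1)
next
  case False
  assume m: "mono h"
  then have "h v \<le> h u" using False by (intro monoD[OF m]) simp
  then show ?thesis using False by (simp add: min_absorb2)
qed

lemma lat_dual_comp:
  assumes "\<phi> \<in> lat_dual" "mono h" "\<And>u. h u \<in> {-1..1}"
  shows "(\<lambda>x. h (\<phi> x)) \<in> lat_dual"
  using assms(1,3) unfolding lat_dual_def by (simp add: max_mono_fun[OF assms(2)] min_mono_fun[OF assms(2)])

lemma chain_lat_dual:
  fixes \<phi> :: "'a::lattice \<Rightarrow> real"
  assumes ch: "\<forall>x y::'a. x \<le> y \<or> y \<le> x"
    and m: "\<And>a b. a \<le> b \<Longrightarrow> \<phi> a \<le> \<phi> b" and b: "\<And>x. \<phi> x \<in> {-1..1}"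
  shows "\<phi> \<in> lat_dual"
  unfolding lat_dual_def
proof (intro CollectI conjI allI)
  fix x show "\<phi> x \<in> {-1..1}" by (rule b)
next
  fix x y :: 'a
  show "\<phi> (sup x y) = max (\<phi> x) (\<phi> y)"
    using ch[rule_format, of x y] m[of x y] m[of y x]
    by (auto simp: sup_absorb1 sup_absorb2 max_def)
  show "\<phi> (inf x y) = min (\<phi> x) (\<phi> y)"
    using ch[rule_format, of x y] m[of x y] m[of y x]
    by (auto simp: inf_absorb1 inf_absorb2 min_def)
qed

lemma zero_lat_dual: "(\<lambda>x. 0) \<in> lat_dual"
  unfolding lat_dual_def by auto

lemma norm_single:
  assumes "\<phi> \<in> lat_dual"
  shows "ereal \<bar>h \<phi>\<bar> \<le> fbl_norm h"
proof -
  have "[\<phi>] \<in> {xs. set xs \<subseteq> lat_dual \<and> (\<forall>x. (\<Sum>\<phi>\<leftarrow>xs. \<bar>\<phi> x\<bar>) \<le> 1)}"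
    using assms lat_dual_bound by auto
  then have "ereal (\<Sum>\<phi>\<leftarrow>[\<phi>]. \<bar>h \<phi>\<bar>) \<le> fbl_norm h"
    unfolding fbl_norm_def by (rule SUP_upper)
  then show ?thesis by simp
qed

lemma fvl_zero: "(\<lambda>\<phi>. 0) \<in> (fvl :: (('a::lattice \<Rightarrow> real) \<Rightarrow> real) set)"
  using fvl.smult[OF fvl.gen[of "undefined::'a"], where c=0] by simp

lemma fvl_ev: "(\<lambda>\<phi>. \<phi> x) \<in> fvl"
  using fvl.gen[of x] by (simp add: delta_def)

lemma fvl_diff: "f \<in> fvl \<Longrightarrow> g \<in> fvl \<Longrightarrow> (\<lambda>\<phi>. f \<phi> - g \<phi>) \<in> fvl"
  using fvl.add[OF _ fvl.smult[of g "-1"], of f] by simp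

lemma fvl_abs_ev: "(\<lambda>\<phi>. \<bar>\<phi> x\<bar>) \<in> fvl"
proof -
  have "(\<lambda>\<phi>. max (\<phi> x) ((-1) * \<phi> x)) \<in> fvl"
    by (intro fvl.sup fvl.smult fvl_ev)
  moreover have "\<And>u::real. max u ((-1) * u) = \<bar>u\<bar>" by auto
  ultimately show ?thesis by simp
qed

lemma fvl_sum: "(\<And>n. n < (N::nat) \<Longrightarrow> F n \<in> fvl) \<Longrightarrow> (\<lambda>\<phi>. \<Sum>n<N. F n \<phi>) \<in> fvl"
proof (induction N)
  case 0 then show ?case using fvl_zero by simp
next
  case (Suc N)
  have "(\<lambda>\<phi>. (\<Sum>n<N. F n \<phi>) + F N \<phi>) \<in> fvl"
    using Suc by (intro fvl.add) auto
  then show ?case by simp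
qed

lemma fvl_homog: "h \<in> fvl \<Longrightarrow> c \<ge> 0 \<Longrightarrow> h (\<lambda>x. c * \<phi> x) = c * h \<phi>"
proof (induction arbitrary: \<phi> rule: fvl.induct)
  case (gen x) then show ?case by (simp add: delta_def)
next
  case (add f g) then show ?case by (simp add: distrib_left)
next
  case (smult f c') then show ?case by simp
next
  case (sup f g) then show ?case by (simp add: max_mult_distrib_left)
next
  case (inf f g) then show ?case by (simp add: min_mult_distrib_left)
qed

lemma fvl_local: "h \<in> fvl \<Longrightarrow> \<exists>S. finite S \<and> (\<forall>\<phi> \<psi>. (\<forall>x\<in>S. \<phi> x = \<psi> x) \<longrightarrow> h \<phi> = h \<psi>)"
proof (induction rule: fvl.induct)
  case (gen x) then show ?case by (intro exI[of _ "{x}"]) (simp add: delta_def)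
next
  case (add f g)
  then obtain S T where "finite S" "\<forall>\<phi> \<psi>. (\<forall>x\<in>S. \<phi> x = \<psi> x) \<longrightarrow> f \<phi> = f \<psi>"
    "finite T" "\<forall>\<phi> \<psi>. (\<forall>x\<in>T. \<phi> x = \<psi> x) \<longrightarrow> g \<phi> = g \<psi>" by blast
  note fg = this(2) this(4)
  show ?case
  proof (intro exI[of _ "S \<union> T"] conjI allI impI)
    show "finite (S \<union> T)" using \<open>finite S\<close> \<open>finite T\<close> by simp
    fix \<phi> \<psi> :: "'a \<Rightarrow> real" assume h: "\<forall>x\<in>S \<union> T. \<phi> x = \<psi> x"
    then have "\<forall>x\<in>S. \<phi> x = \<psi> x" "\<forall>x\<in>T. \<phi> x = \<psi> x" by auto
    then have "f \<phi> = f \<psi>" "g \<phi> = g \<psi>" using fg by blast+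
    then show "f \<phi> + g \<phi> = f \<psi> + g \<psi>" by simp
  qed
next
  case (smult f c) then show ?case by metis
next
  case (sup f g)
  then obtain S T where "finite S" "\<forall>\<phi> \<psi>. (\<forall>x\<in>S. \<phi> x = \<psi> x) \<longrightarrow> f \<phi> = f \<psi>"
    "finite T" "\<forall>\<phi> \<psi>. (\<forall>x\<in>T. \<phi> x = \<psi> x) \<longrightarrow> g \<phi> = g \<psi>" by blast
  note fg = this(2) this(4)
  show ?case
  proof (intro exI[of _ "S \<union> T"] conjI allI impI)
    show "finite (S \<union> T)" using \<open>finite S\<close> \<open>finite T\<close> by simp
    fix \<phi> \<psi> :: "'a \<Rightarrow> real" assume h: "\<forall>x\<in>S \<union> T. \<phi> x = \<psi> x"
    then have "\<forall>x\<in>S. \<phi> x = \<psi> x" "\<forall>x\<in>T. \<phi> x = \<psi> x" by auto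
    then have "f \<phi> = f \<psi>" "g \<phi> = g \<psi>" using fg by blast+
    then show "max (f \<phi>) (g \<phi>) = max (f \<psi>) (g \<psi>)" by simp
  qed
next
  case (inf f g)
  then obtain S T where "finite S" "\<forall>\<phi> \<psi>. (\<forall>x\<in>S. \<phi> x = \<psi> x) \<longrightarrow> f \<phi> = f \<psi>"
    "finite T" "\<forall>\<phi> \<psi>. (\<forall>x\<in>T. \<phi> x = \<psi> x) \<longrightarrow> g \<phi> = g \<psi>" by blast
  note fg = this(2) this(4)
  show ?case
  proof (intro exI[of _ "S \<union> T"] conjI allI impI)
    show "finite (S \<union> T)" using \<open>finite S\<close> \<open>finite T\<close> by simp
    fix \<phi> \<psi> :: "'a \<Rightarrow> real" assume h: "\<forall>x\<in>S \<union> T. \<phi> x = \<psi> x"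
    then have "\<forall>x\<in>S. \<phi> x = \<psi> x" "\<forall>x\<in>T. \<phi> x = \<psi> x" by auto
    then have "f \<phi> = f \<psi>" "g \<phi> = g \<psi>" using fg by blast+
    then show "min (f \<phi>) (g \<phi>) = min (f \<psi>) (g \<psi>)" by simp
  qed
qed


lemma dir1:
  assumes cob: "countably_order_bounded TYPE('a::distrib_lattice)"
  shows "fvl_order_dense TYPE('a)"
  unfolding fvl_order_dense_def
proof (intro ballI impI)
  fix f :: "('a \<Rightarrow> real) \<Rightarrow> real"
  assume fF: "f \<in> fbl" and fpos: "(\<forall>\<phi>\<in>lat_dual. 0 \<le> f \<phi>) \<and> (\<exists>\<phi>\<in>lat_dual. f \<phi> \<noteq> 0)"
  have ph: "pos_homog f" and apx: "\<forall>e>0. \<exists>g\<in>fvl. fbl_norm (\<lambda>\<phi>. f \<phi> - g \<phi>) < ereal e"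
    using fF unfolding fbl_def mem_Collect_eq by blast+
  have phr: "\<And>\<phi> c. \<phi> \<in> lat_dual \<Longrightarrow> 0 \<le> c \<Longrightarrow> (\<lambda>x. c * \<phi> x) \<in> lat_dual \<Longrightarrow> f (\<lambda>x. c * \<phi> x) = c * f \<phi>"
    using ph unfolding pos_homog_def by blast
  have "\<forall>n::nat. \<exists>g. g \<in> fvl \<and> fbl_norm (\<lambda>\<phi>. f \<phi> - g \<phi>) < ereal (1 / real (Suc n))"
  proof
    fix n :: nat
    have "(0::real) < 1 / real (Suc n)" by simp
    then show "\<exists>g. g \<in> fvl \<and> fbl_norm (\<lambda>\<phi>. f \<phi> - g \<phi>) < ereal (1 / real (Suc n))"
      using apx by blast
  qed
  then obtain G where G0: "\<forall>n. G n \<in> fvl \<and> fbl_norm (\<lambda>\<phi>. f \<phi> - G n \<phi>) < ereal (1 / real (Suc n))"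
    by (rule choice[THEN exE])
  have G: "\<And>n. G n \<in> fvl" "\<And>n. fbl_norm (\<lambda>\<phi>. f \<phi> - G n \<phi>) < ereal (1 / real (Suc n))"
    using G0 by auto
  have errG: "\<bar>f \<phi> - G n \<phi>\<bar> < 1 / real (Suc n)" if "\<phi> \<in> lat_dual" for \<phi> n
  proof -
    have "ereal \<bar>f \<phi> - G n \<phi>\<bar> \<le> fbl_norm (\<lambda>\<phi>. f \<phi> - G n \<phi>)"
      using norm_single[OF that, of "\<lambda>\<phi>. f \<phi> - G n \<phi>"] by simp
    then have "ereal \<bar>f \<phi> - G n \<phi>\<bar> < ereal (1 / real (Suc n))" using G(2)[of n] by (rule le_less_trans)
    then show ?thesis by simp
  qed
  have "\<forall>n. \<exists>S. finite S \<and> (\<forall>\<phi> \<psi>. (\<forall>x\<in>S. \<phi> x = \<psi> x) \<longrightarrow> G n \<phi> = G n \<psi>)"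
    using fvl_local G(1) by blast
  then obtain S where S0: "\<forall>n. finite (S n) \<and> (\<forall>\<phi> \<psi>. (\<forall>x\<in>S n. \<phi> x = \<psi> x) \<longrightarrow> G n \<phi> = G n \<psi>)"
    by (rule choice[THEN exE])
  have S: "\<And>n. finite (S n)" "\<And>n \<phi> \<psi>. (\<forall>x\<in>S n. \<phi> x = \<psi> x) \<Longrightarrow> G n \<phi> = G n \<psi>"
    using S0 by auto
  define A where "A = (\<Union>n. S n)"
  have cA: "countable A" unfolding A_def using countable_UN[of UNIV S] countable_finite[OF S(1)] by simp
  have "\<exists>a b. \<forall>x\<in>A. a \<le> x \<and> x \<le> b"
    using cob cA unfolding countably_order_bounded_def by (elim allE[of _ A]) (rule mp)
  then obtain a b where ab0: "\<forall>x\<in>A. a \<le> x \<and> x \<le> b" by (elim exE)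
  have ab: "\<And>x. x \<in> A \<Longrightarrow> a \<le> x \<and> x \<le> b" using ab0 by (rule bspec)
  have GA: "G n \<phi> = G n \<psi>" if "\<forall>x\<in>A. \<phi> x = \<psi> x" for n \<phi> \<psi>
    using that S(2)[of n \<phi> \<psi>] unfolding A_def by blast
  have floc: "f \<phi> = f \<psi>" if p: "\<phi> \<in> lat_dual" "\<psi> \<in> lat_dual" "\<forall>x\<in>A. \<phi> x = \<psi> x" for \<phi> \<psi>
  proof (rule ccontr)
    assume ne: "f \<phi> \<noteq> f \<psi>"
    then have "0 < \<bar>f \<phi> - f \<psi>\<bar> / 2" by simp
    then obtain n where n: "inverse (real (Suc n)) < \<bar>f \<phi> - f \<psi>\<bar> / 2"
      using reals_Archimedean by blast
    have "\<bar>f \<phi> - f \<psi>\<bar> \<le> \<bar>f \<phi> - G n \<phi>\<bar> + \<bar>f \<psi> - G n \<psi>\<bar>"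
      using GA[OF p(3), of n] by simp
    also have "\<dots> < 2 / real (Suc n)" using errG[OF p(1), of n] errG[OF p(2), of n] by simp
    finally show False using n by (simp add: field_simps)
  qed
  define R where "R = (\<lambda>\<phi>::'a\<Rightarrow>real. max \<bar>\<phi> a\<bar> \<bar>\<phi> b\<bar>)"
  have key: "G n \<phi> - f \<phi> \<le> R \<phi> / real (Suc n)" if p: "\<phi> \<in> lat_dual" for n \<phi>
  proof -
    define r where "r = R \<phi>"
    have Ab: "\<bar>\<phi> x\<bar> \<le> r" if "x \<in> A" for x
    proof -
      have "\<phi> a \<le> \<phi> x" "\<phi> x \<le> \<phi> b" using ab[OF that] lat_dual_mono[OF p] by auto
      then show ?thesis unfolding r_def R_def by auto
    qed
    have r1: "r \<le> 1" "0 \<le> r" unfolding r_def R_def using lat_dual_bound[OF p] by auto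
    show ?thesis
    proof (cases "r = 0")
      case True
      have z: "\<forall>x\<in>A. \<phi> x = (\<lambda>x. 0 * \<phi> x) x" using Ab True by auto
      have zl: "(\<lambda>x. 0 * \<phi> x) \<in> lat_dual" using zero_lat_dual by simp
      have "f \<phi> = f (\<lambda>x. 0 * \<phi> x)" by (rule floc[OF p zl z])
      also have "\<dots> = 0 * f \<phi>" by (rule phr[OF p order_refl zl])
      finally have f0: "f \<phi> = 0" by simp
      have "G n \<phi> = G n (\<lambda>x. 0 * \<phi> x)" by (rule GA[OF z])
      also have "\<dots> = 0 * G n \<phi>" using fvl_homog[OF G(1), of 0] by simp
      finally have "G n \<phi> = 0" by simp
      then show ?thesis using f0 r1 unfolding r_def by simp
    next
      case False
      then have rp: "r > 0" using r1 by simp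
      define h where "h = (\<lambda>u::real. max (-1) (min 1 (u / r)))"
      have hm: "mono h"
      proof (rule monoI)
        fix u v :: real assume "u \<le> v"
        then have "u / r \<le> v / r" using rp by (simp add: divide_right_mono)
        then show "h u \<le> h v" unfolding h_def by linarith
      qed
      have ps: "(\<lambda>x. h (\<phi> x)) \<in> lat_dual" using hm by (intro lat_dual_comp[OF p]) (auto simp: h_def)
      have hm2: "mono (\<lambda>u. r * h u)"
      proof (rule monoI)
        fix u v :: real assume "u \<le> v"
        then have "h u \<le> h v" by (rule monoD[OF hm])
        then show "r * h u \<le> r * h v" using rp by (simp add: mult_left_mono)
      qed
      have hb: "-1 \<le> h u" "h u \<le> 1" for u unfolding h_def by auto
      have hb2: "r * h u \<in> {-1..1}" for u
      proof -
        have "r * h u \<le> r * 1" using hb(2)[of u] rp by (intro mult_left_mono) auto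
        moreover have "r * (-1) \<le> r * h u" using hb(1)[of u] rp by (intro mult_left_mono) auto
        ultimately show ?thesis using r1 by auto
      qed
      have "(\<lambda>x. r * h (\<phi> x)) \<in> lat_dual"
        by (rule lat_dual_comp[OF p hm2 hb2])
      then have ps2: "(\<lambda>x. r * (\<lambda>x. h (\<phi> x)) x) \<in> lat_dual" by simp
      have agree: "\<forall>x\<in>A. \<phi> x = (\<lambda>x. r * (\<lambda>x. h (\<phi> x)) x) x"
      proof
        fix x assume "x \<in> A"
        then have "\<bar>\<phi> x\<bar> \<le> r" by (rule Ab)
        then have "\<phi> x / r \<in> {-1..1}" using rp by (auto simp: abs_le_iff field_simps)
        then have "h (\<phi> x) = \<phi> x / r" unfolding h_def by auto
        then show "\<phi> x = (\<lambda>x. r * (\<lambda>x. h (\<phi> x)) x) x" using rp by simp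
      qed
      have "f \<phi> = f (\<lambda>x. r * (\<lambda>x. h (\<phi> x)) x)" by (rule floc[OF p ps2 agree])
      also have "\<dots> = r * f (\<lambda>x. h (\<phi> x))" by (rule phr[OF ps r1(2) ps2])
      finally have e1: "f \<phi> = r * f (\<lambda>x. h (\<phi> x))" .
      have "G n \<phi> = G n (\<lambda>x. r * (\<lambda>x. h (\<phi> x)) x)" by (rule GA[OF agree])
      also have "\<dots> = r * G n (\<lambda>x. h (\<phi> x))" by (rule fvl_homog[OF G(1) r1(2)])
      finally have e2: "G n \<phi> = r * G n (\<lambda>x. h (\<phi> x))" .
      have "\<bar>f (\<lambda>x. h (\<phi> x)) - G n (\<lambda>x. h (\<phi> x))\<bar> < 1 / real (Suc n)" by (rule errG[OF ps])
      then have "G n (\<lambda>x. h (\<phi> x)) - f (\<lambda>x. h (\<phi> x)) \<le> 1 / real (Suc n)" by simp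
      then have "r * (G n (\<lambda>x. h (\<phi> x)) - f (\<lambda>x. h (\<phi> x))) \<le> r * (1 / real (Suc n))"
        using r1 by (intro mult_left_mono) auto
      then show ?thesis using e1 e2 unfolding r_def by (simp add: algebra_simps)
    qed
  qed
  obtain \<phi>0 where p0: "\<phi>0 \<in> lat_dual" "f \<phi>0 \<noteq> 0" using fpos by blast
  have "0 \<le> f \<phi>0" using fpos p0(1) by blast
  then have fp0: "f \<phi>0 > 0" using p0(2) by linarith
  then have "0 < f \<phi>0 / 2" by simp
  then obtain n where n: "inverse (real (Suc n)) < f \<phi>0 / 2"
    using reals_Archimedean by blast
  define g where "g = (\<lambda>\<phi>::'a\<Rightarrow>real. max 0 (G n \<phi> - (1 / real (Suc n)) * R \<phi>))"
  have RF: "R \<in> fvl" unfolding R_def by (rule fvl.sup[OF fvl_abs_ev fvl_abs_ev])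
  have "(\<lambda>\<phi>. (1 / real (Suc n)) * R \<phi>) \<in> fvl" by (rule fvl.smult[OF RF])
  then have "(\<lambda>\<phi>. G n \<phi> - (1 / real (Suc n)) * R \<phi>) \<in> fvl" by (rule fvl_diff[OF G(1)])
  then have gF: "g \<in> fvl" unfolding g_def by (rule fvl.sup[OF fvl_zero])
  show "\<exists>g\<in>fvl. (\<forall>\<phi>\<in>lat_dual. 0 \<le> g \<phi> \<and> g \<phi> \<le> f \<phi>) \<and> (\<exists>\<phi>\<in>lat_dual. g \<phi> \<noteq> 0)"
  proof (intro bexI[OF _ gF] conjI ballI bexI[OF _ p0(1)])
    fix \<phi> :: "'a \<Rightarrow> real" assume p: "\<phi> \<in> lat_dual"
    show "0 \<le> g \<phi>" unfolding g_def by simp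
    have k: "G n \<phi> - f \<phi> \<le> R \<phi> / real (Suc n)" by (rule key[OF p])
    have f0: "0 \<le> f \<phi>" using fpos p by blast
    have "(1 / real (Suc n)) * R \<phi> = R \<phi> / real (Suc n)" by simp
    then have "G n \<phi> - (1 / real (Suc n)) * R \<phi> \<le> f \<phi>" using k by linarith
    then show "g \<phi> \<le> f \<phi>" unfolding g_def using f0 by (rule max.boundedI[rotated])
  next
    have "R \<phi>0 \<le> 1" unfolding R_def using lat_dual_bound[OF p0(1)] by simp
    then have a1: "R \<phi>0 / real (Suc n) \<le> 1 / real (Suc n)" by (simp add: divide_right_mono)
    have a2: "f \<phi>0 - G n \<phi>0 < 1 / real (Suc n)" using errG[OF p0(1), of n] by simp
    have a3: "1 / real (Suc n) < f \<phi>0 / 2" using n by (simp add: inverse_eq_divide)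
    have "(1 / real (Suc n)) * R \<phi>0 = R \<phi>0 / real (Suc n)" by simp
    then have "G n \<phi>0 - (1 / real (Suc n)) * R \<phi>0 > 0" using a1 a2 a3 by linarith
    then show "g \<phi>0 \<noteq> 0" unfolding g_def by simp
  qed
qed


lemma list_suminf:
  fixes h :: "'b \<Rightarrow> nat \<Rightarrow> real"
  assumes "\<And>\<phi>. \<phi> \<in> set xs \<Longrightarrow> summable (h \<phi>)"
  shows "summable (\<lambda>k. \<Sum>\<phi>\<leftarrow>xs. h \<phi> k) \<and> (\<Sum>\<phi>\<leftarrow>xs. suminf (h \<phi>)) = (\<Sum>k. \<Sum>\<phi>\<leftarrow>xs. h \<phi> k)"
  using assms
proof (induction xs)
  case Nil then show ?case by simp
next
  case (Cons a xs)
  then have IH: "summable (\<lambda>k. \<Sum>\<phi>\<leftarrow>xs. h \<phi> k)" "(\<Sum>\<phi>\<leftarrow>xs. suminf (h \<phi>)) = (\<Sum>k. \<Sum>\<phi>\<leftarrow>xs. h \<phi> k)"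
    by auto
  have sa: "summable (h a)" using Cons by simp
  show ?case using IH sa by (simp add: summable_add suminf_add)
qed

lemma norm_le:
  assumes "\<And>xs. set xs \<subseteq> lat_dual \<Longrightarrow> (\<forall>y. (\<Sum>\<phi>\<leftarrow>xs. \<bar>\<phi> y\<bar>) \<le> 1) \<Longrightarrow> (\<Sum>\<phi>\<leftarrow>xs. \<bar>h \<phi>\<bar>) \<le> B"
  shows "fbl_norm h \<le> ereal B"
  unfolding fbl_norm_def by (rule SUP_least) (use assms in auto)

definition Dn :: "(nat \<Rightarrow> 'a) \<Rightarrow> real \<Rightarrow> nat \<Rightarrow> ('a \<Rightarrow> real) \<Rightarrow> real" where
  "Dn x s n \<phi> = s * (\<phi> (x n) - \<phi> (x 0))"

definition FF :: "(nat \<Rightarrow> 'a) \<Rightarrow> real \<Rightarrow> ('a \<Rightarrow> real) \<Rightarrow> real" where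
  "FF x s \<phi> = max 0 (max 0 (s * \<phi> (x 0)) - (\<Sum>n. (1/2)^n * Dn x s n \<phi>))"

context
  fixes x :: "nat \<Rightarrow> 'a::lattice" and s :: real
  assumes s1: "\<bar>s\<bar> = 1"
    and Dpos: "\<And>\<phi> n. \<phi> \<in> lat_dual \<Longrightarrow> 0 \<le> Dn x s n \<phi>"
begin

lemma D_bound: "\<phi> \<in> lat_dual \<Longrightarrow> \<bar>Dn x s n \<phi>\<bar> \<le> \<bar>\<phi> (x n)\<bar> + \<bar>\<phi> (x 0)\<bar>"
  unfolding Dn_def using s1 by (simp add: abs_mult)

lemma D_bound2: "\<phi> \<in> lat_dual \<Longrightarrow> \<bar>Dn x s n \<phi>\<bar> \<le> 2"
proof -
  assume p: "\<phi> \<in> lat_dual"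
  have "\<bar>\<phi> (x n)\<bar> \<le> 1" "\<bar>\<phi> (x 0)\<bar> \<le> 1" using lat_dual_bound[OF p] by auto
  then show ?thesis using D_bound[OF p, of n] by linarith
qed

lemma T_summable: "\<phi> \<in> lat_dual \<Longrightarrow> summable (\<lambda>n. (1/2)^n * Dn x s n \<phi>)"
proof -
  assume p: "\<phi> \<in> lat_dual"
  show ?thesis
  proof (rule summable_comparison_test'[where g="\<lambda>n. 2 * (1/2)^n" and N=0])
    show "summable (\<lambda>n. 2 * (1/2::real)^n)" by (intro summable_mult summable_geometric) simp
    fix n show "norm ((1/2)^n * Dn x s n \<phi>) \<le> 2 * (1/2)^n"
      using D_bound2[OF p, of n] by (simp add: abs_mult)
  qed
qed

lemma T_nonneg: "\<phi> \<in> lat_dual \<Longrightarrow> 0 \<le> (\<Sum>n. (1/2)^n * Dn x s n \<phi>)"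
  using T_summable Dpos by (intro suminf_nonneg) auto

lemma FF_bound: "\<phi> \<in> lat_dual \<Longrightarrow> 0 \<le> FF x s \<phi> \<and> FF x s \<phi> \<le> \<bar>\<phi> (x 0)\<bar>"
proof -
  assume p: "\<phi> \<in> lat_dual"
  have "\<bar>s * \<phi> (x 0)\<bar> = \<bar>\<phi> (x 0)\<bar>" using s1 by (simp add: abs_mult)
  then have "s * \<phi> (x 0) \<le> \<bar>\<phi> (x 0)\<bar>" by (metis abs_ge_self)
  then show ?thesis using T_nonneg[OF p] unfolding FF_def by auto
qed

lemma FF_homog: "pos_homog (FF x s)"
  unfolding pos_homog_def
proof (intro ballI allI impI)
  fix \<phi> :: "'a \<Rightarrow> real" and c :: real
  assume p: "\<phi> \<in> lat_dual" and c: "0 \<le> c" and cp: "(\<lambda>x. c * \<phi> x) \<in> lat_dual"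
  have "(\<Sum>n. (1/2)^n * Dn x s n (\<lambda>x. c * \<phi> x)) = (\<Sum>n. c * ((1/2)^n * Dn x s n \<phi>))"
    unfolding Dn_def by (simp add: algebra_simps)
  also have "\<dots> = c * (\<Sum>n. (1/2)^n * Dn x s n \<phi>)" by (rule suminf_mult[OF T_summable[OF p]])
  finally have "FF x s (\<lambda>x. c * \<phi> x) = max 0 (c * max 0 (s * \<phi> (x 0)) - c * (\<Sum>n. (1/2)^n * Dn x s n \<phi>))"
    unfolding FF_def using c by (simp add: max_mult_distrib_left algebra_simps)
  also have "\<dots> = c * FF x s \<phi>" unfolding FF_def using c
    by (simp add: max_mult_distrib_left right_diff_distrib)
  finally show "FF x s (\<lambda>x. c * \<phi> x) = c * FF x s \<phi>" .
qed

lemma FF_norm: "fbl_norm (FF x s) \<le> ereal 1"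
proof (rule norm_le)
  fix xs :: "('a \<Rightarrow> real) list"
  assume xs: "set xs \<subseteq> lat_dual" "\<forall>y. (\<Sum>\<phi>\<leftarrow>xs. \<bar>\<phi> y\<bar>) \<le> 1"
  have "(\<Sum>\<phi>\<leftarrow>xs. \<bar>FF x s \<phi>\<bar>) \<le> (\<Sum>\<phi>\<leftarrow>xs. \<bar>\<phi> (x 0)\<bar>)"
    using xs(1) FF_bound by (intro sum_list_mono) auto
  also have "\<dots> \<le> 1" using xs(2) by blast
  finally show "(\<Sum>\<phi>\<leftarrow>xs. \<bar>FF x s \<phi>\<bar>) \<le> 1" .
qed

definition gN :: "nat \<Rightarrow> ('a \<Rightarrow> real) \<Rightarrow> real" where
  "gN N \<phi> = max 0 (max 0 (s * \<phi> (x 0)) - (\<Sum>n<N. (1/2)^n * (s * (\<phi> (x n) - \<phi> (x 0)))))"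

lemma gN_fvl: "gN N \<in> fvl"
proof -
  have "(\<lambda>\<phi>. max 0 (max 0 (s * \<phi> (x 0)) - (\<Sum>n<N. (1/2)^n * (s * (\<phi> (x n) - \<phi> (x 0)))))) \<in> fvl"
    by (intro fvl.sup fvl_zero fvl.smult fvl_diff fvl_sum fvl_ev)
  then show ?thesis unfolding gN_def[abs_def] .
qed

lemma gN_err: "fbl_norm (\<lambda>\<phi>. FF x s \<phi> - gN N \<phi>) \<le> ereal (4 * (1/2)^N)"
proof (rule norm_le)
  fix xs :: "('a \<Rightarrow> real) list"
  assume xs: "set xs \<subseteq> lat_dual" "\<forall>y. (\<Sum>\<phi>\<leftarrow>xs. \<bar>\<phi> y\<bar>) \<le> 1"
  define E where "E = (\<lambda>\<phi> k. (1/2::real)^(k+N) * (\<bar>\<phi> (x (k+N))\<bar> + \<bar>\<phi> (x 0)\<bar>))"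
  define B where "B = (\<lambda>k. (2 * (1/2::real)^N) * (1/2)^k)"
  have sB: "summable B" unfolding B_def by (intro summable_mult summable_geometric) simp
  have vB: "suminf B = 4 * (1/2)^N" unfolding B_def
    by (subst suminf_mult[OF summable_geometric]) (simp_all add: suminf_geometric)
  have EB: "E \<phi> k \<le> B k" if "\<phi> \<in> lat_dual" for \<phi> k
  proof -
    have "\<bar>\<phi> (x (k+N))\<bar> + \<bar>\<phi> (x 0)\<bar> \<le> 2" using lat_dual_bound[OF that, of "x (k+N)"] lat_dual_bound[OF that, of "x 0"] by linarith
    then have "E \<phi> k \<le> (1/2::real)^(k+N) * 2" unfolding E_def by (intro mult_left_mono) auto
    then show ?thesis unfolding B_def by (simp add: power_add mult_ac)
  qed
  have sE: "summable (E \<phi>)" if "\<phi> \<in> lat_dual" for \<phi>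
    by (rule summable_comparison_test'[OF sB, of 0]) (use EB[OF that] in \<open>auto simp: E_def\<close>)
  have pt: "\<bar>FF x s \<phi> - gN N \<phi>\<bar> \<le> suminf (E \<phi>)" if p: "\<phi> \<in> lat_dual" for \<phi>
  proof -
    let ?f = "\<lambda>n. (1/2::real)^n * Dn x s n \<phi>"
    have sp: "suminf ?f = (\<Sum>k. ?f (k + N)) + sum ?f {..<N}"
      by (rule suminf_split_initial_segment[OF T_summable[OF p]])
    have st: "summable (\<lambda>k. ?f (k + N))" using T_summable[OF p] by (subst summable_iff_shift)
    have tl0: "0 \<le> (\<Sum>k. ?f (k + N))" using st Dpos[OF p] by (intro suminf_nonneg) auto
    have "(\<Sum>k. ?f (k + N)) \<le> suminf (E \<phi>)"
    proof (rule suminf_le[OF _ st sE[OF p]])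
      fix k show "?f (k + N) \<le> E \<phi> k"
        unfolding E_def using D_bound[OF p, of "k+N"] by (intro mult_left_mono) auto
    qed
    moreover have "FF x s \<phi> = max 0 (max 0 (s * \<phi> (x 0)) - ((\<Sum>k. ?f (k + N)) + sum ?f {..<N}))"
      unfolding FF_def using sp by simp
    moreover have "gN N \<phi> = max 0 (max 0 (s * \<phi> (x 0)) - sum ?f {..<N})"
      unfolding gN_def Dn_def by simp
    ultimately show ?thesis using tl0 by (simp add: max_def abs_le_iff)
  qed
  have sl: "summable (\<lambda>k. \<Sum>\<phi>\<leftarrow>xs. E \<phi> k)" and eqs: "(\<Sum>\<phi>\<leftarrow>xs. suminf (E \<phi>)) = (\<Sum>k. \<Sum>\<phi>\<leftarrow>xs. E \<phi> k)"
    using list_suminf[of xs E] sE xs(1) by auto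
  have "(\<Sum>\<phi>\<leftarrow>xs. \<bar>FF x s \<phi> - gN N \<phi>\<bar>) \<le> (\<Sum>\<phi>\<leftarrow>xs. suminf (E \<phi>))"
    using xs(1) pt by (intro sum_list_mono) auto
  also have "\<dots> = (\<Sum>k. \<Sum>\<phi>\<leftarrow>xs. E \<phi> k)" by (rule eqs)
  also have "\<dots> \<le> suminf B"
  proof (rule suminf_le[OF _ sl sB])
    fix k
    have "(\<Sum>\<phi>\<leftarrow>xs. E \<phi> k) = (1/2::real)^(k+N) * ((\<Sum>\<phi>\<leftarrow>xs. \<bar>\<phi> (x (k+N))\<bar>) + (\<Sum>\<phi>\<leftarrow>xs. \<bar>\<phi> (x 0)\<bar>))"
      unfolding E_def by (simp add: sum_list_const_mult sum_list_addf)
    also have "\<dots> \<le> (1/2::real)^(k+N) * 2"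
      using xs(2)[rule_format, of "x (k+N)"] xs(2)[rule_format, of "x 0"] by (intro mult_left_mono) auto
    finally show "(\<Sum>\<phi>\<leftarrow>xs. E \<phi> k) \<le> B k" unfolding B_def by (simp add: power_add mult_ac)
  qed
  finally show "(\<Sum>\<phi>\<leftarrow>xs. \<bar>FF x s \<phi> - gN N \<phi>\<bar>) \<le> 4 * (1/2)^N" using vB by simp
qed

lemma FF_fbl: "FF x s \<in> fbl"
  unfolding fbl_def
proof (intro CollectI conjI allI impI)
  show "pos_homog (FF x s)" by (rule FF_homog)
  show "fbl_norm (FF x s) < \<infinity>" using FF_norm by (rule le_less_trans) simp
  fix e :: real assume e: "0 < e"
  obtain N where N: "(1/2::real)^N < e/4" using real_arch_pow_inv[of "e/4" "1/2"] e by auto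
  have "ereal (4 * (1/2)^N) < ereal e" using N by simp
  then have "fbl_norm (\<lambda>\<phi>. FF x s \<phi> - gN N \<phi>) < ereal e"
    by (rule le_less_trans[OF gN_err])
  then show "\<exists>g\<in>fvl. fbl_norm (\<lambda>\<phi>. FF x s \<phi> - g \<phi>) < ereal e" using gN_fvl by blast
qed

lemma core_not_dense:
  assumes ext: "\<And>\<psi> S. \<psi> \<in> lat_dual \<Longrightarrow> finite S \<Longrightarrow> \<exists>N. \<forall>t. 0 < t \<longrightarrow> t \<le> 1 \<longrightarrow>
      (\<exists>\<psi>'\<in>lat_dual. (\<forall>y\<in>S. \<psi>' y = t * \<psi> y) \<and> \<psi>' (x 0) = t * \<psi> (x 0) \<and> \<psi>' (x N) = s)"
    and cs: "(\<lambda>y::'a. s) \<in> lat_dual"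
  shows "\<not> fvl_order_dense TYPE('a)"
proof
  assume "fvl_order_dense TYPE('a)"
  moreover have "(\<forall>\<phi>\<in>lat_dual. 0 \<le> FF x s \<phi>) \<and> (\<exists>\<phi>\<in>lat_dual. FF x s \<phi> \<noteq> 0)"
  proof
    show "\<forall>\<phi>\<in>lat_dual. 0 \<le> FF x s \<phi>" using FF_bound by blast
    have "s * s = 1" using s1 by (metis abs_mult_self_eq mult_1)
    then have "FF x s (\<lambda>y. s) = 1" unfolding FF_def Dn_def by simp
    then have "FF x s (\<lambda>y. s) \<noteq> 0" by simp
    then show "\<exists>\<phi>\<in>lat_dual. FF x s \<phi> \<noteq> 0" by (rule bexI[OF _ cs])
  qed
  ultimately obtain g \<phi>1 where g: "g \<in> fvl" "\<And>\<phi>. \<phi> \<in> lat_dual \<Longrightarrow> 0 \<le> g \<phi> \<and> g \<phi> \<le> FF x s \<phi>"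
    and p1: "\<phi>1 \<in> lat_dual" "g \<phi>1 \<noteq> 0"
    unfolding fvl_order_dense_def using FF_fbl by blast
  obtain S where S: "finite S" "\<And>\<phi> \<psi>. (\<forall>x\<in>S. \<phi> x = \<psi> x) \<Longrightarrow> g \<phi> = g \<psi>"
    using fvl_local[OF g(1)] by blast
  obtain N where N: "\<And>t. 0 < t \<Longrightarrow> t \<le> 1 \<Longrightarrow>
      (\<exists>\<psi>'\<in>lat_dual. (\<forall>y\<in>S. \<psi>' y = t * \<phi>1 y) \<and> \<psi>' (x 0) = t * \<phi>1 (x 0) \<and> \<psi>' (x N) = s)"
    using ext[OF p1(1) S(1)] by blast
  define c where "c = (1/2::real)^N"
  define t where "t = c / (1 + c)"
  have c0: "0 < c" unfolding c_def by simp
  have t0: "0 < t" "t \<le> 1" unfolding t_def using c0 by auto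
  have tc: "t * (1 + c) = c" unfolding t_def using c0 by simp
  obtain \<psi> where \<psi>: "\<psi> \<in> lat_dual" "\<forall>y\<in>S. \<psi> y = t * \<phi>1 y" "\<psi> (x 0) = t * \<phi>1 (x 0)" "\<psi> (x N) = s"
    using N[OF t0] by blast
  have s2: "s = 1 \<or> s = -1" using s1 by linarith
  then have ss: "s * s = 1" by auto
  have "\<bar>s * \<phi>1 (x 0)\<bar> = \<bar>\<phi>1 (x 0)\<bar>" using s1 by (simp add: abs_mult)
  then have sp: "s * \<phi>1 (x 0) \<le> 1"
    using lat_dual_bound[OF p1(1), of "x 0"] abs_ge_self[of "s * \<phi>1 (x 0)"] by linarith
  have T1: "c * Dn x s N \<psi> \<le> (\<Sum>n. (1/2)^n * Dn x s n \<psi>)"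
    using sum_le_suminf[OF T_summable[OF \<psi>(1)], of "{N}"] Dpos[OF \<psi>(1)] unfolding c_def by simp
  have "Dn x s N \<psi> = s * s - t * (s * \<phi>1 (x 0))"
    unfolding Dn_def using \<psi>(3,4) by (simp add: algebra_simps)
  then have D1: "Dn x s N \<psi> = 1 - t * (s * \<phi>1 (x 0))" using ss by simp
  have tsp: "t * (s * \<phi>1 (x 0)) \<le> t * 1" using sp t0 by (intro mult_left_mono) auto
  have "c * (1 - t) \<le> c * Dn x s N \<psi>" using D1 tsp c0 by (intro mult_left_mono) auto
  moreover have "c * (1 - t) = c - c * t" by (simp add: right_diff_distrib)
  moreover have "t * (1 + c) = t + c * t" by (simp add: distrib_left mult.commute)
  ultimately have Tge: "t \<le> (\<Sum>n. (1/2)^n * Dn x s n \<psi>)" using T1 tc by linarith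
  have e: "s * \<psi> (x 0) = t * (s * \<phi>1 (x 0))" unfolding \<psi>(3) by (simp add: mult.left_commute)
  have "max 0 (s * \<psi> (x 0)) \<le> t" unfolding e using tsp t0 by simp
  then have "FF x s \<psi> \<le> 0" unfolding FF_def using Tge by simp
  then have "g \<psi> \<le> 0" using g(2)[OF \<psi>(1)] by simp
  moreover have "g \<psi> = g (\<lambda>y. t * \<phi>1 y)" using S(2) \<psi>(2) by simp
  moreover have "g (\<lambda>y. t * \<phi>1 y) = t * g \<phi>1" using fvl_homog[OF g(1)] t0 by simp
  ultimately have "t * g \<phi>1 \<le> 0" by simp
  then have "g \<phi>1 \<le> 0" using t0 by (simp add: mult_le_0_iff)
  then show False using g(2)[OF p1(1)] p1(2) by simp
qed

end

lemma dir2: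
  assumes ch: "\<forall>x y::'a. x \<le> y \<or> y \<le> x"
    and dense: "fvl_order_dense TYPE('a::distrib_lattice)"
  shows "countably_order_bounded TYPE('a)"
proof (rule ccontr)
  assume "\<not> countably_order_bounded TYPE('a)"
  then have "\<exists>A::'a set. countable A \<and> \<not> (\<exists>a b. \<forall>x\<in>A. a \<le> x \<and> x \<le> b)"
    unfolding countably_order_bounded_def by blast
  then obtain A :: "'a set" where cA: "countable A" and nb0: "\<not> (\<exists>a b. \<forall>x\<in>A. a \<le> x \<and> x \<le> b)"
    by blast
  have nb: "\<exists>x\<in>A. \<not> (a \<le> x \<and> x \<le> b)" for a b using nb0 by blast
  have An: "A \<noteq> {}" using nb[of undefined undefined] by blast
  define e where "e = from_nat_into A"
  have eA: "e n \<in> A" for n unfolding e_def using An by (rule from_nat_into)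
  have esurj: "\<exists>n. e n = a" if "a \<in> A" for a unfolding e_def using from_nat_into_surj[OF cA that] .
  have cs1: "(\<lambda>y. s) \<in> lat_dual" if "\<bar>s\<bar> = 1" for s :: real
    unfolding lat_dual_def using that by auto
  show False
  proof (cases "\<exists>a. \<forall>x\<in>A. a \<le> x")
    case True
    then obtain a where a: "\<forall>x\<in>A. a \<le> x" by blast
    have ub: "\<exists>x\<in>A. \<not> x \<le> b" for b using nb[of a b] a by blast
    define u where "u = rec_nat (e 0) (\<lambda>n v. sup v (e (Suc n)))"
    have u0: "u 0 = e 0" and uS: "\<And>n. u (Suc n) = sup (u n) (e (Suc n))" unfolding u_def by simp_all
    have eu: "e n \<le> u n" for n by (cases n) (simp_all add: u0 uS)
    have um: "u 0 \<le> u n" for n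
    proof (induction n)
      case (Suc n) then show ?case using uS[of n] by (metis sup.coboundedI1)
    qed simp
    have unb: "\<exists>n. \<not> u n \<le> m" for m
    proof -
      obtain y where "y \<in> A" "\<not> y \<le> m" using ub by blast
      then obtain n where "e n = y" using esurj by blast
      then show ?thesis using eu[of n] \<open>\<not> y \<le> m\<close> by (metis order_trans)
    qed
    have "\<not> fvl_order_dense TYPE('a)"
    proof (rule core_not_dense[of 1 u])
      show "\<bar>1::real\<bar> = 1" by simp
      show "\<And>\<phi> n. \<phi> \<in> lat_dual \<Longrightarrow> 0 \<le> Dn u 1 n \<phi>"
      proof -
        fix \<phi> :: "'a \<Rightarrow> real" and n assume "\<phi> \<in> lat_dual"
        then have "\<phi> (u 0) \<le> \<phi> (u n)" using um[of n] by (rule lat_dual_mono)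
        then show "0 \<le> Dn u 1 n \<phi>" unfolding Dn_def by simp
      qed
      show "(\<lambda>y. 1::real) \<in> lat_dual" using cs1[of 1] by simp
      fix \<psi> :: "'a \<Rightarrow> real" and S :: "'a set" assume p: "\<psi> \<in> lat_dual" and fS: "finite S"
      define m where "m = Sup_fin (insert (u 0) S)"
      have mS: "y \<le> m" if "y \<in> insert (u 0) S" for y
        unfolding m_def using fS that by (intro Sup_fin.coboundedI) auto
      obtain N where N: "\<not> u N \<le> m" using unb by blast
      show "\<exists>N. \<forall>t. 0 < t \<longrightarrow> t \<le> 1 \<longrightarrow>
        (\<exists>\<psi>'\<in>lat_dual. (\<forall>y\<in>S. \<psi>' y = t * \<psi> y) \<and> \<psi>' (u 0) = t * \<psi> (u 0) \<and> \<psi>' (u N) = 1)"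
      proof (intro exI allI impI)
        fix t :: real assume t: "0 < t" "t \<le> 1"
        define \<psi>' where "\<psi>' = (\<lambda>y. if y \<le> m then t * \<psi> y else 1)"
        have bd: "\<bar>t * \<psi> y\<bar> \<le> 1" for y
          using lat_dual_bound[OF p, of y] t by (simp add: abs_mult mult_le_one)
        have "\<psi>' \<in> lat_dual"
        proof (rule chain_lat_dual[OF ch])
          fix y show "\<psi>' y \<in> {-1..1}" unfolding \<psi>'_def using bd[of y] by (auto simp: abs_le_iff)
        next
          fix y z :: 'a assume yz: "y \<le> z"
          show "\<psi>' y \<le> \<psi>' z"
          proof (cases "z \<le> m")
            case True
            then have "y \<le> m" using yz by (rule order_trans[rotated])
            then show ?thesis unfolding \<psi>'_def using True lat_dual_mono[OF p yz] t
              by (simp add: mult_left_mono)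
          next
            case False
            then show ?thesis unfolding \<psi>'_def using bd[of y] by (auto simp: abs_le_iff)
          qed
        qed
        moreover have "\<forall>y\<in>S. \<psi>' y = t * \<psi> y" unfolding \<psi>'_def using mS by auto
        moreover have "\<psi>' (u 0) = t * \<psi> (u 0)" unfolding \<psi>'_def using mS by auto
        moreover have "\<psi>' (u N) = 1" unfolding \<psi>'_def using N by auto
        ultimately show "\<exists>\<psi>'\<in>lat_dual. (\<forall>y\<in>S. \<psi>' y = t * \<psi> y) \<and> \<psi>' (u 0) = t * \<psi> (u 0) \<and> \<psi>' (u N) = 1"
          by blast
      qed
    qed
    then show False using dense by simp
  next
    case False
    then have lb: "\<exists>x\<in>A. \<not> a \<le> x" for a by blast
    define u where "u = rec_nat (e 0) (\<lambda>n v. inf v (e (Suc n)))"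
    have u0: "u 0 = e 0" and uS: "\<And>n. u (Suc n) = inf (u n) (e (Suc n))" unfolding u_def by simp_all
    have eu: "u n \<le> e n" for n by (cases n) (simp_all add: u0 uS)
    have um: "u n \<le> u 0" for n
    proof (induction n)
      case (Suc n) then show ?case using uS[of n] by (metis inf.coboundedI1)
    qed simp
    have unb: "\<exists>n. \<not> m \<le> u n" for m
    proof -
      obtain y where "y \<in> A" "\<not> m \<le> y" using lb by blast
      then obtain n where "e n = y" using esurj by blast
      then show ?thesis using eu[of n] \<open>\<not> m \<le> y\<close> by (metis order_trans)
    qed
    have "\<not> fvl_order_dense TYPE('a)"
    proof (rule core_not_dense[of "-1" u])
      show "\<bar>-1::real\<bar> = 1" by simp
      show "\<And>\<phi> n. \<phi> \<in> lat_dual \<Longrightarrow> 0 \<le> Dn u (-1) n \<phi>"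
      proof -
        fix \<phi> :: "'a \<Rightarrow> real" and n assume "\<phi> \<in> lat_dual"
        then have "\<phi> (u n) \<le> \<phi> (u 0)" using um[of n] by (rule lat_dual_mono)
        then show "0 \<le> Dn u (-1) n \<phi>" unfolding Dn_def by simp
      qed
      show "(\<lambda>y. -1::real) \<in> lat_dual" using cs1[of "-1"] by simp
      fix \<psi> :: "'a \<Rightarrow> real" and S :: "'a set" assume p: "\<psi> \<in> lat_dual" and fS: "finite S"
      define m where "m = Inf_fin (insert (u 0) S)"
      have mS: "m \<le> y" if "y \<in> insert (u 0) S" for y
        unfolding m_def using fS that by (intro Inf_fin.coboundedI) auto
      obtain N where N: "\<not> m \<le> u N" using unb by blast
      show "\<exists>N. \<forall>t. 0 < t \<longrightarrow> t \<le> 1 \<longrightarrow>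
        (\<exists>\<psi>'\<in>lat_dual. (\<forall>y\<in>S. \<psi>' y = t * \<psi> y) \<and> \<psi>' (u 0) = t * \<psi> (u 0) \<and> \<psi>' (u N) = -1)"
      proof (intro exI allI impI)
        fix t :: real assume t: "0 < t" "t \<le> 1"
        define \<psi>' where "\<psi>' = (\<lambda>y. if m \<le> y then t * \<psi> y else -1)"
        have bd: "\<bar>t * \<psi> y\<bar> \<le> 1" for y
          using lat_dual_bound[OF p, of y] t by (simp add: abs_mult mult_le_one)
        have "\<psi>' \<in> lat_dual"
        proof (rule chain_lat_dual[OF ch])
          fix y show "\<psi>' y \<in> {-1..1}" unfolding \<psi>'_def using bd[of y] by (auto simp: abs_le_iff)
        next
          fix y z :: 'a assume yz: "y \<le> z"
          show "\<psi>' y \<le> \<psi>' z"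
          proof (cases "m \<le> y")
            case True
            then have "m \<le> z" using yz by (rule order_trans)
            then show ?thesis unfolding \<psi>'_def using True lat_dual_mono[OF p yz] t
              by (simp add: mult_left_mono)
          next
            case False
            then show ?thesis unfolding \<psi>'_def using bd[of z] by (auto simp: abs_le_iff)
          qed
        qed
        moreover have "\<forall>y\<in>S. \<psi>' y = t * \<psi> y" unfolding \<psi>'_def using mS by auto
        moreover have "\<psi>' (u 0) = t * \<psi> (u 0)" unfolding \<psi>'_def using mS by auto
        moreover have "\<psi>' (u N) = -1" unfolding \<psi>'_def using N by auto
        ultimately show "\<exists>\<psi>'\<in>lat_dual. (\<forall>y\<in>S. \<psi>' y = t * \<psi> y) \<and> \<psi>' (u 0) = t * \<psi> (u 0) \<and> \<psi>' (u N) = -1"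
          by blast
      qed
    qed
    then show False using dense by simp
  qed
qed


theorem mainTheorem8:
  shows "(countably_order_bounded TYPE('a::distrib_lattice) \<longrightarrow> fvl_order_dense TYPE('a))
    \<and> ((\<forall>x y :: 'a. x \<le> y \<or> y \<le> x) \<longrightarrow>
         fvl_order_dense TYPE('a) \<longrightarrow> countably_order_bounded TYPE('a))"
  using dir1 dir2 by blast

end
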